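(* Consider the group-weighted network variant described in the context, with two networks $(s_{N_k})_{k=1}^G$ and $(s'_{N_k})_{k=1}^G$ and all other parameters identical. Suppose $s'_{N_k}=z\,s_{N_k}$ for all $k$, where $1\le z\le 1/\max_k s_{N_k}$. Let $D_n^t$ and $D_n'^t$ be the corresponding sets of new-product consumers. Then $D_n^t\subseteq D_n'^t$ for all $t\ge1$.
   Context: Group-weighted network variant. There are $N$ individuals partitioned into $G\ge2$ nonempty groups $N_1,\dots,N_G$ (also denoting cardinalities). Members of $N_k$ have aspiration level $H_{N_k}$, with $H_{N_1}>\cdots>H_{N_G}$; write $H_i$ for individual $i$'s level. The incumbent $p_c$ gives payoff $v_L$ to everyone, where $H_{N_2}<v_L<H_{N_1}$. The new product $p_n$ gives individual $i$ the payoff $v_{Hi}\ge H_{N_1}$. Product similarities are $s_{p_c,p_c}=s_{p_n,p_n}=1$, $s_{p_n,p_c}=s_p\in(0,1)$ and $s_{p_c,p_n}=0$. A social network is a vector $(s_{N_k})_{k=1}^G$ with $s_{N_k}\in[0,1]$ and $\max_k s_{N_k}>0$. Individual similarities are $s_{i,i}=1$ and $s_{i,j}=s_{N_k}$ whenever $j\in N_k$ and $j\neq i$. Dynamics. In period $0$ everyone consumes $p_c$ ($D_c^0=\{1,\dots,N\}$, $D_n^0=\emptyset$). For $t\ge1$, $U_i^t(p_c)=\sum_{t'=0}^{t-1}\sum_{j\in D_c^{t'}}s_{i,j}(v_L-H_i)$ and $U_i^t(p_n)=s_pU_i^t(p_c)+\sum_{t'=0}^{t-1}\sum_{j\in D_n^{t'}}s_{i,j}(v_{Hj}-H_i)$.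 Individual $i\in D_n^t$ iff $U_i^t(p_n)>U_i^t(p_c)$; otherwise $i\in D_c^t$. *)

theory Defs
  imports Complex_Main
begin

text \<open>Individuals are 0..<N; grp i < G is the group of individual i; groups are 0..<G
  (group k here corresponds to N_{k+1} in the paper).  Hg k is the aspiration level of
  group k, vH i the payoff of the new product to individual i, s k the network weight of
  group k, sp the product similarity s_{p_n,p_c}.\<close>

definition sim :: "(nat \<Rightarrow> nat) \<Rightarrow> (nat \<Rightarrow> real) \<Rightarrow> nat \<Rightarrow> nat \<Rightarrow> real" where
  "sim grp s i j = (if i = j then 1 else s (grp j))"

text \<open>Cumulative utilities, given the history hs = [D_n^0, ..., D_n^{t-1}].
  D_c^{t'} is the complement {0..<N} - D_n^{t'}.\<close>

definition Ucur :: "nat \<Rightarrow> (nat \<Rightarrow> nat) \<Rightarrow> (nat \<Rightarrow> real) \<Rightarrow> (nat \<Rightarrow> real) \<Rightarrow> real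
    \<Rightarrow> nat set list \<Rightarrow> nat \<Rightarrow> real" where
  "Ucur N grp Hg s vL hs i =
     sum_list (map (\<lambda>D. \<Sum>j\<in>{..<N} - D. sim grp s i j * (vL - Hg (grp i))) hs)"

definition Unew :: "nat \<Rightarrow> (nat \<Rightarrow> nat) \<Rightarrow> (nat \<Rightarrow> real) \<Rightarrow> (nat \<Rightarrow> real) \<Rightarrow> real
    \<Rightarrow> (nat \<Rightarrow> real) \<Rightarrow> real \<Rightarrow> nat set list \<Rightarrow> nat \<Rightarrow> real" where
  "Unew N grp Hg s vL vH sp hs i =
     sp * Ucur N grp Hg s vL hs i
     + sum_list (map (\<lambda>D. \<Sum>j\<in>D. sim grp s i j * (vH j - Hg (grp i))) hs)"

primrec hist :: "nat \<Rightarrow> (nat \<Rightarrow> nat) \<Rightarrow> (nat \<Rightarrow> real) \<Rightarrow> (nat \<Rightarrow> real) \<Rightarrow> real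
    \<Rightarrow> (nat \<Rightarrow> real) \<Rightarrow> real \<Rightarrow> nat \<Rightarrow> nat set list" where
  "hist N grp Hg s vL vH sp 0 = [{}]"
| "hist N grp Hg s vL vH sp (Suc t) =
     hist N grp Hg s vL vH sp t @
       [{i. i < N \<and> Unew N grp Hg s vL vH sp (hist N grp Hg s vL vH sp t) i
                     > Ucur N grp Hg s vL (hist N grp Hg s vL vH sp t) i}]"

definition Dn :: "nat \<Rightarrow> (nat \<Rightarrow> nat) \<Rightarrow> (nat \<Rightarrow> real) \<Rightarrow> (nat \<Rightarrow> real) \<Rightarrow> real
    \<Rightarrow> (nat \<Rightarrow> real) \<Rightarrow> real \<Rightarrow> nat \<Rightarrow> nat set" where
  "Dn N grp Hg s vL vH sp t = hist N grp Hg s vL vH sp t ! t"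

end

theory Submission
  imports Defs
begin

lemma last_pos:
  fixes a :: "nat \<Rightarrow> real"
  assumes "\<forall>k\<le>t. a k \<le> a t" "0 < (\<Sum>k<Suc t. a k)"
  shows "0 < a t"
proof (rule ccontr)
  assume h: "\<not> 0 < a t"
  have "(\<Sum>k<Suc t. a k) \<le> (\<Sum>k<Suc t. a t)" by (rule sum_mono) (use assms in auto)
  also have "\<dots> = real (Suc t) * a t" by simp
  also have "\<dots> \<le> 0" using h by (simp add: mult_nonneg_nonpos)
  finally show False using assms(2) by linarith
qed

lemma chain_sub:
  fixes A :: "nat \<Rightarrow> 'a set"
  shows "(\<forall>k<t. A k \<subseteq> A (Suc k)) \<Longrightarrow> k \<le> t \<Longrightarrow> A k \<subseteq> A t"
proof (induction t)
  case 0 then show ?case by simp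
next
  case (Suc t)
  show ?case
  proof (cases "k = Suc t")
    case False
    then have "k \<le> t" using Suc.prems by auto
    then have "A k \<subseteq> A t" using Suc by auto
    then show ?thesis using Suc.prems by auto
  qed simp
qed

context
  fixes N G :: nat and grp :: "nat \<Rightarrow> nat" and Hg vH :: "nat \<Rightarrow> real" and vL sp :: real
  assumes grp_range: "\<forall>i<N. grp i < G"
    and H_decr: "\<forall>k. Suc k < G \<longrightarrow> Hg (Suc k) < Hg k"
    and vL1: "Hg 1 < vL" and vL0: "vL < Hg 0"
    and vH_ge: "\<forall>i<N. vH i \<ge> Hg 0"
    and sp0: "0 < sp" and sp1: "sp < 1"
begin

definition g where
  "g D i j = (if j \<in> D then vH j - Hg (grp i) else (sp - 1) * (vL - Hg (grp i)))"

definition PP where "PP w D i = (\<Sum>j<N. sim grp w i j * g D i j)"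
definition Oth where "Oth w D i = (\<Sum>j\<in>{..<N}-{i}. w (grp j) * g D i j)"

lemma hist_len: "length (hist N grp Hg w vL vH sp t) = Suc t"
  by (induction t) auto

lemma hist_nth: "k \<le> t \<Longrightarrow> hist N grp Hg w vL vH sp t ! k = Dn N grp Hg w vL vH sp k"
proof (induction t)
  case 0 then show ?case by (simp add: Dn_def)
next
  case (Suc t)
  show ?case
  proof (cases "k \<le> t")
    case True
    then show ?thesis using Suc by (simp add: nth_append hist_len less_Suc_eq_le)
  next
    case False
    then have "k = Suc t" using Suc.prems by auto
    then show ?thesis by (simp add: Dn_def)
  qed
qed

lemma hist_eq: "hist N grp Hg w vL vH sp t = map (Dn N grp Hg w vL vH sp) [0..<Suc t]"
  by (rule nth_equalityI) (simp_all add: hist_len hist_nth del: upt_Suc)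

lemma Dn_0: "Dn N grp Hg w vL vH sp 0 = {}" by (simp add: Dn_def)

lemma Dn_Suc: "Dn N grp Hg w vL vH sp (Suc t) = {i. i < N \<and>
   Unew N grp Hg w vL vH sp (hist N grp Hg w vL vH sp t) i > Ucur N grp Hg w vL (hist N grp Hg w vL vH sp t) i}"
  by (simp add: Dn_def nth_append hist_len)

lemma Dn_sub: "Dn N grp Hg w vL vH sp t \<subseteq> {..<N}"
  by (cases t) (auto simp: Dn_0 Dn_Suc)

lemma PP_split: "D \<subseteq> {..<N} \<Longrightarrow> PP w D i = (sp - 1) * (\<Sum>j\<in>{..<N} - D. sim grp w i j * (vL - Hg (grp i)))
   + (\<Sum>j\<in>D. sim grp w i j * (vH j - Hg (grp i)))"
proof -
  assume D: "D \<subseteq> {..<N}"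
  have "PP w D i = (\<Sum>j\<in>{..<N} - D. sim grp w i j * g D i j) + (\<Sum>j\<in>D. sim grp w i j * g D i j)"
    unfolding PP_def using D by (simp add: sum.subset_diff[of D "{..<N}"])
  also have "(\<Sum>j\<in>{..<N} - D. sim grp w i j * g D i j) = (sp - 1) * (\<Sum>j\<in>{..<N} - D. sim grp w i j * (vL - Hg (grp i)))"
    unfolding sum_distrib_left by (rule sum.cong) (auto simp: g_def)
  also have "(\<Sum>j\<in>D. sim grp w i j * g D i j) = (\<Sum>j\<in>D. sim grp w i j * (vH j - Hg (grp i)))"
    by (rule sum.cong) (auto simp: g_def)
  finally show ?thesis .
qed

lemma diff_list: "(\<forall>D\<in>set hs. D \<subseteq> {..<N}) \<Longrightarrow>
  Unew N grp Hg w vL vH sp hs i - Ucur N grp Hg w vL hs i = sum_list (map (\<lambda>D. PP w D i) hs)"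
proof (induction hs)
  case Nil then show ?case by (simp add: Unew_def Ucur_def)
next
  case (Cons D hs)
  then show ?case by (simp add: Unew_def Ucur_def PP_split algebra_simps)
qed

lemma Dn_Suc': "Dn N grp Hg w vL vH sp (Suc t) =
   {i. i < N \<and> 0 < (\<Sum>k<Suc t. PP w (Dn N grp Hg w vL vH sp k) i)}"
proof -
  have sub: "\<forall>D\<in>set (hist N grp Hg w vL vH sp t). D \<subseteq> {..<N}"
    using Dn_sub by (auto simp: hist_eq simp del: upt_Suc)
  have eq: "sum_list (map (\<lambda>D. PP w D i) (hist N grp Hg w vL vH sp t))
      = (\<Sum>k<Suc t. PP w (Dn N grp Hg w vL vH sp k) i)" for i
    unfolding hist_eq map_map sum_set_upt_conv_sum_list_nat[symmetric] set_upt
    by (simp add: atLeast0LessThan o_def del: upt_Suc)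
  show ?thesis
    unfolding Dn_Suc
  proof (rule Collect_cong)
    fix i
    have "Unew N grp Hg w vL vH sp (hist N grp Hg w vL vH sp t) i - Ucur N grp Hg w vL (hist N grp Hg w vL vH sp t) i
      = (\<Sum>k<Suc t. PP w (Dn N grp Hg w vL vH sp k) i)"
      using diff_list[OF sub, of w i] eq[of i] by simp
    then show "(i < N \<and> Unew N grp Hg w vL vH sp (hist N grp Hg w vL vH sp t) i > Ucur N grp Hg w vL (hist N grp Hg w vL vH sp t) i)
      = (i < N \<and> 0 < (\<Sum>k<Suc t. PP w (Dn N grp Hg w vL vH sp k) i))" by linarith
  qed
qed

lemma Dn_Suc_iff: "i \<in> Dn N grp Hg w vL vH sp (Suc t) \<longleftrightarrow>
   i < N \<and> 0 < (\<Sum>k<Suc t. PP w (Dn N grp Hg w vL vH sp k) i)"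
  by (simp only: Dn_Suc' mem_Collect_eq)

lemma Hg_anti: "m \<le> k \<Longrightarrow> k < G \<Longrightarrow> Hg k \<le> Hg m"
proof (induction k)
  case 0 then show ?case by simp
next
  case (Suc k)
  show ?case
  proof (cases "m = Suc k")
    case False
    then have "m \<le> k" using Suc.prems by auto
    then show ?thesis using Suc H_decr by force
  qed simp
qed

lemma g_mono: "i < N \<Longrightarrow> grp i \<noteq> 0 \<Longrightarrow> D \<subseteq> D' \<Longrightarrow> j < N \<Longrightarrow> g D i j \<le> g D' i j"
proof -
  assume i: "i < N" "grp i \<noteq> 0" and DD: "D \<subseteq> D'" and j: "j < N"
  have "Hg (grp i) \<le> Hg 1" using Hg_anti[of 1 "grp i"] i grp_range by auto
  then have c: "(sp - 1) * (vL - Hg (grp i)) < 0" using vL1 sp1 by (intro mult_neg_pos) auto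
  have "Hg (grp i) \<le> Hg 0" using Hg_anti[of 0 "grp i"] i grp_range by auto
  then have d: "0 \<le> vH j - Hg (grp i)" using vH_ge j by force
  show ?thesis using c d DD by (auto simp: g_def)
qed

lemma sim_nonneg: "\<forall>k<G. 0 \<le> w k \<Longrightarrow> j < N \<Longrightarrow> 0 \<le> sim grp w i j"
  by (simp add: sim_def grp_range)

lemma PP_mono: "\<forall>k<G. 0 \<le> w k \<Longrightarrow> i < N \<Longrightarrow> grp i \<noteq> 0 \<Longrightarrow> D \<subseteq> D' \<Longrightarrow> PP w D i \<le> PP w D' i"
  unfolding PP_def by (intro sum_mono mult_left_mono) (auto simp: g_mono sim_nonneg)

lemma Oth_mono: "\<forall>k<G. 0 \<le> w k \<Longrightarrow> i < N \<Longrightarrow> grp i \<noteq> 0 \<Longrightarrow> D \<subseteq> D' \<Longrightarrow> Oth w D i \<le> Oth w D' i"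
  unfolding Oth_def by (intro sum_mono mult_left_mono) (auto simp: g_mono grp_range)

lemma PP_decomp: "i < N \<Longrightarrow> PP w D i = g D i i + Oth w D i"
proof -
  assume i: "i < N"
  have "PP w D i = sim grp w i i * g D i i + (\<Sum>j\<in>{..<N}-{i}. sim grp w i j * g D i j)"
    unfolding PP_def using i by (simp add: sum.remove)
  also have "(\<Sum>j\<in>{..<N}-{i}. sim grp w i j * g D i j) = Oth w D i"
    unfolding Oth_def by (rule sum.cong) (auto simp: sim_def)
  finally show ?thesis by (simp add: sim_def)
qed

lemma Oth_scale: "\<forall>k<G. w' k = z * w k \<Longrightarrow> Oth w' D i = z * Oth w D i"
  unfolding Oth_def sum_distrib_left by (rule sum.cong) (auto simp: grp_range)

lemma group0: "\<forall>k<G. 0 \<le> w k \<Longrightarrow> i < N \<Longrightarrow> grp i = 0 \<Longrightarrow>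
   0 < (\<Sum>k<Suc t. PP w (Dn N grp Hg w vL vH sp k) i)"
proof -
  assume w: "\<forall>k<G. 0 \<le> w k" and i: "i < N" "grp i = 0"
  have c: "0 < (sp - 1) * (vL - Hg 0)" using vL0 sp1 by (intro mult_neg_neg) auto
  have gnn: "0 \<le> g D i j" if "j < N" for D j
    using c vH_ge that i by (auto simp: g_def)
  have PPnn: "0 \<le> PP w D i" for D
    unfolding PP_def by (intro sum_nonneg mult_nonneg_nonneg) (auto simp: gnn sim_nonneg[OF w])
  have "0 < sim grp w i i * g {} i i" using c i by (simp add: sim_def g_def)
  also have "\<dots> = (\<Sum>j\<in>{i}. sim grp w i j * g {} i j)" by simp
  also have "\<dots> \<le> PP w {} i" unfolding PP_def
    by (rule sum_mono2) (use i in \<open>auto intro!: mult_nonneg_nonneg simp: gnn sim_nonneg[OF w]\<close>)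
  also have "\<dots> = (\<Sum>k\<in>{0}. PP w (Dn N grp Hg w vL vH sp k) i)" by (simp add: Dn_0)
  also have "\<dots> \<le> (\<Sum>k<Suc t. PP w (Dn N grp Hg w vL vH sp k) i)"
    by (rule sum_mono2) (auto simp: PPnn)
  finally show ?thesis .
qed

lemma Dn_group0: "\<forall>k<G. 0 \<le> w k \<Longrightarrow> i < N \<Longrightarrow> grp i = 0 \<Longrightarrow> i \<in> Dn N grp Hg w vL vH sp (Suc t)"
  using group0 by (simp add: Dn_Suc')

lemma Dn_mono_aux:
  assumes w: "\<forall>k<G. 0 \<le> w k"
  shows "\<forall>k\<le>t. Dn N grp Hg w vL vH sp k \<subseteq> Dn N grp Hg w vL vH sp (Suc k)"
proof (induction t)
  case 0 then show ?case by (simp add: Dn_0)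
next
  case (Suc t)
  let ?D = "Dn N grp Hg w vL vH sp"
  have "?D (Suc t) \<subseteq> ?D (Suc (Suc t))"
  proof
    fix i assume i: "i \<in> ?D (Suc t)"
    then have iN: "i < N" and S: "0 < (\<Sum>k<Suc t. PP w (?D k) i)" unfolding Dn_Suc_iff by blast+
    show "i \<in> ?D (Suc (Suc t))"
    proof (cases "grp i = 0")
      case True then show ?thesis using Dn_group0[OF w iN True] by blast
    next
      case False
      have ch: "?D k \<subseteq> ?D t" if "k \<le> t" for k
        using chain_sub[of t ?D k] Suc.IH that by auto
      have "PP w (?D k) i \<le> PP w (?D t) i" if "k \<le> t" for k
        by (rule PP_mono[OF w iN False ch[OF that]])
      then have pos: "0 < PP w (?D t) i" using last_pos[OF _ S] by blast
      have "?D t \<subseteq> ?D (Suc t)" using Suc.IH by simp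
      then have "PP w (?D t) i \<le> PP w (?D (Suc t)) i"
        by (rule PP_mono[OF w iN False])
      then have "0 < (\<Sum>k<Suc t. PP w (?D k) i) + PP w (?D (Suc t)) i" using S pos by linarith
      then have "0 < (\<Sum>k<Suc (Suc t). PP w (?D k) i)" by (simp only: sum.lessThan_Suc)
      then show ?thesis using iN unfolding Dn_Suc_iff by blast
    qed
  qed
  then have new: "?D (Suc t) \<subseteq> ?D (Suc (Suc t))" .
  show ?case
  proof (intro allI impI)
    fix k assume k: "k \<le> Suc t"
    show "?D k \<subseteq> ?D (Suc k)"
    proof (cases "k = Suc t")
      case True then show ?thesis using new by simp
    next
      case False then have "k \<le> t" using k by simp
      then show ?thesis using Suc.IH by blast
    qed
  qed
qed

lemma Dn_mono: "\<forall>k<G. 0 \<le> w k \<Longrightarrow> k \<le> m \<Longrightarrow> Dn N grp Hg w vL vH sp k \<subseteq> Dn N grp Hg w vL vH sp m"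
  using chain_sub[of m "Dn N grp Hg w vL vH sp" k] Dn_mono_aux by blast

lemma main:
  assumes s: "\<forall>k<G. 0 \<le> s k" and s': "\<forall>k<G. s' k = z * s k" and z: "1 \<le> z"
  shows "\<forall>k\<le>t. Dn N grp Hg s vL vH sp k \<subseteq> Dn N grp Hg s' vL vH sp k"
proof (induction t)
  case 0 then show ?case by (simp add: Dn_0)
next
  case (Suc t)
  let ?D = "Dn N grp Hg s vL vH sp"
  let ?D' = "Dn N grp Hg s' vL vH sp"
  have s'nn: "\<forall>k<G. 0 \<le> s' k" using s s' z by simp
  have "?D (Suc t) \<subseteq> ?D' (Suc t)"
  proof
    fix i assume i: "i \<in> ?D (Suc t)"
    then have iN: "i < N" and S: "0 < (\<Sum>k<Suc t. PP s (?D k) i)" unfolding Dn_Suc_iff by blast+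
    show "i \<in> ?D' (Suc t)"
    proof (cases "grp i = 0")
      case True then show ?thesis using Dn_group0[OF s'nn iN True] by blast
    next
      case False
      define m where "m = (LEAST k. i \<in> ?D (Suc k))"
      have m1: "i \<in> ?D (Suc m)" unfolding m_def using i by (rule LeastI)
      have mt: "m \<le> t" unfolding m_def using i by (rule Least_le)
      have notin: "i \<notin> ?D k" if "k \<le> m" for k
      proof (cases k)
        case 0 then show ?thesis by (simp add: Dn_0)
      next
        case (Suc k')
        then have "k' < m" using that by simp
        then show ?thesis using not_less_Least[of k' "\<lambda>k. i \<in> ?D (Suc k)"] Suc m_def by auto
      qed
      have "Hg (grp i) \<le> Hg 1" using Hg_anti[of 1 "grp i"] iN False grp_range by auto
      then have cneg: "(sp - 1) * (vL - Hg (grp i)) < 0" using vL1 sp1 by (intro mult_neg_pos) auto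
      have Sm: "0 < (\<Sum>k<Suc m. PP s (?D k) i)" using m1 unfolding Dn_Suc_iff by blast
      also have "\<dots> \<le> (\<Sum>k<Suc m. Oth s (?D k) i)"
      proof (rule sum_mono)
        fix k assume "k \<in> {..<Suc m}"
        then have "i \<notin> ?D k" using notin by auto
        then show "PP s (?D k) i \<le> Oth s (?D k) i"
          using PP_decomp[OF iN] cneg by (simp add: g_def)
      qed
      finally have Om: "0 < (\<Sum>k<Suc m. Oth s (?D k) i)" .
      have "Oth s (?D k) i \<le> Oth s (?D m) i" if "k \<le> m" for k
        by (rule Oth_mono[OF s iN False Dn_mono[OF s that]])
      then have bm: "0 < Oth s (?D m) i" using last_pos[OF _ Om] by blast
      have bk: "0 \<le> Oth s (?D k) i" if "m \<le> k" for k
        using Oth_mono[OF s iN False Dn_mono[OF s that]] bm by linarith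
      have Opos: "0 < (\<Sum>k<Suc t. Oth s (?D k) i)"
      proof -
        have "(\<Sum>k<Suc m. Oth s (?D k) i) \<le> (\<Sum>k<Suc t. Oth s (?D k) i)"
          by (rule sum_mono2) (use mt bk in auto)
        then show ?thesis using Om by linarith
      qed
      have "(\<Sum>k<Suc t. PP s (?D k) i) = (\<Sum>k<Suc t. g (?D k) i i) + (\<Sum>k<Suc t. Oth s (?D k) i)"
        by (simp only: PP_decomp[OF iN] sum.distrib)
      also have "\<dots> \<le> (\<Sum>k<Suc t. g (?D k) i i) + z * (\<Sum>k<Suc t. Oth s (?D k) i)"
      proof -
        have "1 * (\<Sum>k<Suc t. Oth s (?D k) i) \<le> z * (\<Sum>k<Suc t. Oth s (?D k) i)"
          using mult_right_mono[OF z, of "\<Sum>k<Suc t. Oth s (?D k) i"] Opos by linarith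
        then show ?thesis by linarith
      qed
      also have "\<dots> = (\<Sum>k<Suc t. PP s' (?D k) i)"
        by (simp only: PP_decomp[OF iN] sum.distrib Oth_scale[OF s'] sum_distrib_left)
      also have "\<dots> \<le> (\<Sum>k<Suc t. PP s' (?D' k) i)"
      proof (rule sum_mono)
        fix k assume "k \<in> {..<Suc t}"
        then have "?D k \<subseteq> ?D' k" using Suc.IH by auto
        then show "PP s' (?D k) i \<le> PP s' (?D' k) i" by (rule PP_mono[OF s'nn iN False])
      qed
      finally have "0 < (\<Sum>k<Suc t. PP s' (?D' k) i)" using S by linarith
      then show ?thesis using iN unfolding Dn_Suc_iff by blast
    qed
  qed
  then have new: "?D (Suc t) \<subseteq> ?D' (Suc t)" .
  show ?case
  proof (intro allI impI)
    fix k assume k: "k \<le> Suc t"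
    show "?D k \<subseteq> ?D' k"
    proof (cases "k = Suc t")
      case True then show ?thesis using new by simp
    next
      case False then have "k \<le> t" using k by simp
      then show ?thesis using Suc.IH by blast
    qed
  qed
qed

end

theorem proposition5:
  fixes N G :: nat and grp :: "nat \<Rightarrow> nat" and Hg vH s s' :: "nat \<Rightarrow> real"
    and vL sp z :: real
  assumes G2: "G \<ge> 2"
    and grp_range: "\<forall>i<N. grp i < G"
    and grp_nonempty: "\<forall>k<G. \<exists>i<N. grp i = k"
    and H_decr: "\<forall>k. Suc k < G \<longrightarrow> Hg (Suc k) < Hg k"
    and vL_bounds: "Hg 1 < vL" "vL < Hg 0"
    and vH_ge: "\<forall>i<N. vH i \<ge> Hg 0"
    and sp: "0 < sp" "sp < 1"
    and s_range: "\<forall>k<G. 0 \<le> s k \<and> s k \<le> 1"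
    and s_pos: "\<exists>k<G. s k > 0"
    and s'_def: "\<forall>k<G. s' k = z * s k"
    and z_bounds: "1 \<le> z" "z \<le> 1 / Max (s ` {..<G})"
  shows "\<forall>t\<ge>1. Dn N grp Hg s vL vH sp t \<subseteq> Dn N grp Hg s' vL vH sp t"
proof -
  have s0: "\<forall>k<G. 0 \<le> s k" using s_range by auto
  show ?thesis
    using main[OF grp_range H_decr vL_bounds vH_ge sp s0 s'_def z_bounds(1)] by blast
qed

end
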